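(* Let $q\in\mathbb C$ with $|q|=1$, $q^2\neq1$, let $A,B$ be self-adjoint operators on a Hilbert space $\mathcal H$, and let $\lambda,\lambda q\in\rho(A)$, $\mu,\mu q\in\rho(B)$. Then (a) the operator inclusion $qR_{\lambda q}(A)B\subseteq BR_\lambda(A)$ holds if and only if $$R_\lambda(A)R_\mu(B)=qR_{\mu q}(B)R_{\lambda q}(A)+\mu\lambda q(q-1)R_{\mu q}(B)R_{\lambda q}(A)R_\lambda(A)R_\mu(B)$$ holds as an identity of bounded operators on $\mathcal H$; (b) the operator inclusion $R_\mu(B)A\subseteq qAR_{\mu q}(B)$ holds if and only if $$R_\lambda(A)R_\mu(B)=qR_{\mu q}(B)R_{\lambda q}(A)+\mu\lambda q(q-1)R_\lambda(A)R_\mu(B)R_{\mu q}(B)R_{\lambda q}(A)$$ holds on $\mathcal H$.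
   Context: $\rho(T)$ denotes the resolvent set and $R_\lambda(T)=(T-\lambda I)^{-1}$ the resolvent of a closed operator $T$. For operators $S,T$, $S\subseteq T$ means $T$ is an extension of $S$; products of unbounded operators have their natural domains. *)

theory Defs
  imports Complex_Main
begin

class cvec = ab_group_add +
  fixes scaleC :: "complex \<Rightarrow> 'a \<Rightarrow> 'a"
  assumes scaleC_add_right: "scaleC a (x + y) = scaleC a x + scaleC a y"
    and scaleC_add_left: "scaleC (a + b) x = scaleC a x + scaleC b x"
    and scaleC_scaleC: "scaleC a (scaleC b x) = scaleC (a * b) x"
    and scaleC_one: "scaleC 1 x = x"

class cinner_space = cvec +
  fixes cinner :: "'a \<Rightarrow> 'a \<Rightarrow> complex"
  assumes cinner_commute: "cinner x y = cnj (cinner y x)"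
    and cinner_add_left: "cinner (x + y) z = cinner x z + cinner y z"
    and cinner_scaleC_left: "cinner (scaleC a x) y = cnj a * cinner x y"
    and cinner_nonneg: "0 \<le> Re (cinner x x)"
    and cinner_eq_zero: "cinner x x = 0 \<longleftrightarrow> x = 0"

definition cnorm :: "'a::cinner_space \<Rightarrow> real" where
  "cnorm x = sqrt (Re (cinner x x))"

class chilbert = cinner_space +
  assumes cauchy_converges:
    "(\<forall>e>0. \<exists>N::nat. \<forall>m\<ge>N. \<forall>n\<ge>N. sqrt (Re (cinner (X m - X n) (X m - X n))) < e)
      \<Longrightarrow> (\<exists>L. \<forall>e>0. \<exists>N::nat. \<forall>n\<ge>N. sqrt (Re (cinner (X n - L) (X n - L))) < e)"

type_synonym 'a linop = "'a set \<times> ('a \<Rightarrow> 'a)"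

definition odom :: "'a linop \<Rightarrow> 'a set" where "odom T = fst T"
definition oapp :: "'a linop \<Rightarrow> 'a \<Rightarrow> 'a" where "oapp T = snd T"

text \<open>Extension: \<open>op_le S T\<close> means S \<subseteq> T (T extends S).\<close>
definition op_le :: "'a linop \<Rightarrow> 'a linop \<Rightarrow> bool" where
  "op_le S T \<longleftrightarrow> odom S \<subseteq> odom T \<and> (\<forall>x\<in>odom S. oapp S x = oapp T x)"

definition op_eq :: "'a linop \<Rightarrow> 'a linop \<Rightarrow> bool" where
  "op_eq S T \<longleftrightarrow> op_le S T \<and> op_le T S"

definition op_comp :: "'a linop \<Rightarrow> 'a linop \<Rightarrow> 'a linop" where
  "op_comp S T = ({x \<in> odom T. oapp T x \<in> odom S}, \<lambda>x. oapp S (oapp T x))"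

definition op_scale :: "complex \<Rightarrow> 'a::cvec linop \<Rightarrow> 'a linop" where
  "op_scale c T = (odom T, \<lambda>x. scaleC c (oapp T x))"

definition op_total :: "('a \<Rightarrow> 'a) \<Rightarrow> 'a linop" where
  "op_total f = (UNIV, f)"

definition linear_op :: "'a::cvec linop \<Rightarrow> bool" where
  "linear_op T \<longleftrightarrow> 0 \<in> odom T
     \<and> (\<forall>x\<in>odom T. \<forall>y\<in>odom T. x + y \<in> odom T \<and> oapp T (x + y) = oapp T x + oapp T y)
     \<and> (\<forall>c. \<forall>x\<in>odom T. scaleC c x \<in> odom T \<and> oapp T (scaleC c x) = scaleC c (oapp T x))"

definition densely_defined :: "'a::cinner_space linop \<Rightarrow> bool" where
  "densely_defined T \<longleftrightarrow> (\<forall>x. \<forall>e>0. \<exists>y\<in>odom T. cnorm (x - y) < e)"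

definition adjoint_op :: "'a::cinner_space linop \<Rightarrow> 'a linop" where
  "adjoint_op T =
     ({y. \<exists>z. \<forall>x\<in>odom T. cinner (oapp T x) y = cinner x z},
      \<lambda>y. THE z. \<forall>x\<in>odom T. cinner (oapp T x) y = cinner x z)"

definition self_adjoint :: "'a::cinner_space linop \<Rightarrow> bool" where
  "self_adjoint T \<longleftrightarrow> linear_op T \<and> densely_defined T \<and> op_eq T (adjoint_op T)"

definition resolvent_set :: "'a::cinner_space linop \<Rightarrow> complex set" where
  "resolvent_set T = {lam.
     bij_betw (\<lambda>x. oapp T x - scaleC lam x) (odom T) UNIV \<and>
     (\<exists>C. \<forall>y. cnorm (inv_into (odom T) (\<lambda>x. oapp T x - scaleC lam x) y) \<le> C * cnorm y)}"

definition resolvent :: "'a::cinner_space linop \<Rightarrow> complex \<Rightarrow> 'a \<Rightarrow> 'a" where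
  "resolvent T lam = inv_into (odom T) (\<lambda>x. oapp T x - scaleC lam x)"

end

theory Submission
  imports Defs
begin

interpretation cv: module "scaleC :: complex \<Rightarrow> 'a::cvec \<Rightarrow> 'a"
  by unfold_locales (auto simp: scaleC_add_right scaleC_add_left scaleC_scaleC scaleC_one)

lemma lin_add: "linear_op T \<Longrightarrow> x \<in> odom T \<Longrightarrow> y \<in> odom T \<Longrightarrow>
   x + y \<in> odom T \<and> oapp T (x + y) = oapp T x + oapp T y"
  unfolding linear_op_def by blast

lemma lin_scale: "linear_op T \<Longrightarrow> x \<in> odom T \<Longrightarrow>
   scaleC c x \<in> odom T \<and> oapp T (scaleC c x) = scaleC c (oapp T x)"
  unfolding linear_op_def by blast

lemma lin_diff: assumes "linear_op T" "x \<in> odom T" "y \<in> odom T"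
  shows "x - y \<in> odom T \<and> oapp T (x - y) = oapp T x - oapp T y"
proof -
  have e: "scaleC (-1) y = - y" by (simp add: cv.scale_minus_left)
  have m: "- y \<in> odom T" "oapp T (- y) = - oapp T y"
    using lin_scale[OF assms(1) assms(3), of "-1"] by (simp_all add: e cv.scale_minus_left)
  show ?thesis using lin_add[OF assms(1) assms(2) m(1)] m(2) by simp
qed

lemma res_in: "lam \<in> resolvent_set T \<Longrightarrow> resolvent T lam y \<in> odom T"
  unfolding resolvent_set_def resolvent_def
  by (auto intro: inv_into_into simp: bij_betw_def)

lemma res_right: "lam \<in> resolvent_set T \<Longrightarrow>
   oapp T (resolvent T lam y) - scaleC lam (resolvent T lam y) = y"
  unfolding resolvent_set_def resolvent_def
  by (auto intro!: f_inv_into_f simp: bij_betw_def)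

lemma res_eq: "lam \<in> resolvent_set T \<Longrightarrow> x \<in> odom T \<Longrightarrow>
   oapp T x - scaleC lam x = y \<Longrightarrow> resolvent T lam y = x"
  unfolding resolvent_set_def resolvent_def
  by (auto intro!: inv_into_f_f simp: bij_betw_def)

lemma res_lin: assumes "linear_op T" "lam \<in> resolvent_set T"
  shows "resolvent T lam (scaleC a y + scaleC b z) =
         scaleC a (resolvent T lam y) + scaleC b (resolvent T lam z)"
proof -
  let ?u = "resolvent T lam y" and ?v = "resolvent T lam z"
  have u: "?u \<in> odom T" and v: "?v \<in> odom T" using res_in[OF assms(2)] by auto
  have au: "scaleC a ?u \<in> odom T" "oapp T (scaleC a ?u) = scaleC a (oapp T ?u)"
    using lin_scale[OF assms(1) u] by auto
  have bv: "scaleC b ?v \<in> odom T" "oapp T (scaleC b ?v) = scaleC b (oapp T ?v)"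
    using lin_scale[OF assms(1) v] by auto
  have s: "scaleC a ?u + scaleC b ?v \<in> odom T"
     "oapp T (scaleC a ?u + scaleC b ?v) = scaleC a (oapp T ?u) + scaleC b (oapp T ?v)"
    using lin_add[OF assms(1) au(1) bv(1)] au bv by auto
  have ry: "oapp T ?u = y + scaleC lam ?u" and rz: "oapp T ?v = z + scaleC lam ?v"
    using res_right[OF assms(2), of y] res_right[OF assms(2), of z] by (auto simp: algebra_simps)
  show ?thesis
    apply (rule res_eq[OF assms(2) s(1)])
    apply (simp add: s(2) ry rz cv.scale_right_distrib cv.scale_scale cv.scale_right_diff_distrib)
    apply (simp add: algebra_simps)
    done
qed

lemma res_scale: "linear_op T \<Longrightarrow> lam \<in> resolvent_set T \<Longrightarrow>
   resolvent T lam (scaleC a y) = scaleC a (resolvent T lam y)"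
  using res_lin[of T lam a y 0 0] by simp

lemma res_add: "linear_op T \<Longrightarrow> lam \<in> resolvent_set T \<Longrightarrow>
   resolvent T lam (y + z) = resolvent T lam y + resolvent T lam z"
  using res_lin[of T lam 1 y 1 z] by (simp add: scaleC_one)

lemma res_diff: "linear_op T \<Longrightarrow> lam \<in> resolvent_set T \<Longrightarrow>
   resolvent T lam (y - z) = resolvent T lam y - resolvent T lam z"
  using res_lin[of T lam 1 y "-1" z] by (simp add: scaleC_one cv.scale_minus_left)

lemma res_id: assumes "linear_op T" "a \<in> resolvent_set T" "b \<in> resolvent_set T"
  shows "resolvent T b z - resolvent T a z = scaleC (b - a) (resolvent T b (resolvent T a z))"
proof -
  let ?u = "resolvent T a z" and ?v = "resolvent T b z"
  have u: "?u \<in> odom T" using res_in[OF assms(2)] by auto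
  have v: "?v \<in> odom T" using res_in[OF assms(3)] by auto
  have d: "?v - ?u \<in> odom T" "oapp T (?v - ?u) = oapp T ?v - oapp T ?u"
    using lin_diff[OF assms(1) v u] by auto
  have ru: "oapp T ?u = z + scaleC a ?u" and rv: "oapp T ?v = z + scaleC b ?v"
    using res_right[OF assms(2), of z] res_right[OF assms(3), of z] by (auto simp: algebra_simps)
  have "resolvent T b (scaleC (b - a) ?u) = ?v - ?u"
    apply (rule res_eq[OF assms(3) d(1)])
    by (simp add: d(2) ru rv cv.scale_right_diff_distrib cv.scale_left_diff_distrib)
  then show ?thesis using res_scale[OF assms(1) assms(3)] by simp
qed

lemma res_id2: assumes "linear_op T" "a \<in> resolvent_set T" "b \<in> resolvent_set T"
  shows "resolvent T b z - resolvent T a z = scaleC (b - a) (resolvent T a (resolvent T b z))"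
proof -
  have "resolvent T a z - resolvent T b z = scaleC (a - b) (resolvent T a (resolvent T b z))"
    by (rule res_id[OF assms(1) assms(3) assms(2)])
  then have "- (resolvent T b z - resolvent T a z) = - scaleC (b - a) (resolvent T a (resolvent T b z))"
    by (simp add: cv.scale_minus_left[symmetric])
  then show ?thesis by (metis minus_diff_eq minus_minus)
qed

lemma partA_fwd:
  assumes linA: "linear_op A" and linB: "linear_op B"
    and rl: "lam \<in> resolvent_set A" and rlq: "lam * q \<in> resolvent_set A"
    and rm: "mu \<in> resolvent_set B" and rmq: "mu * q \<in> resolvent_set B"
    and inc: "\<forall>x\<in>odom B. resolvent A lam x \<in> odom B \<and>
       scaleC q (resolvent A (lam * q) (oapp B x)) = oapp B (resolvent A lam x)"
  shows "resolvent A lam (resolvent B mu y) =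
              scaleC q (resolvent B (mu * q) (resolvent A (lam * q) y))
              + scaleC (mu * lam * q * (q - 1))
                  (resolvent B (mu * q) (resolvent A (lam * q)
                     (resolvent A lam (resolvent B mu y))))"
proof -
  let ?x = "resolvent B mu y"
  let ?u = "resolvent A lam ?x"
  let ?c = "mu * lam * q * (q - 1)"
  have x: "?x \<in> odom B" by (rule res_in[OF rm])
  have hx: "oapp B ?x = y + scaleC mu ?x" using res_right[OF rm, of y] by (simp add: algebra_simps)
  have u: "?u \<in> odom B" and hu: "oapp B ?u = scaleC q (resolvent A (lam * q) (oapp B ?x))"
    using inc x by auto
  have idA: "resolvent A (lam*q) ?x = ?u + scaleC (lam * q - lam) (resolvent A (lam*q) ?u)"
    using res_id[OF linA rl rlq, of ?x] by (simp add: algebra_simps)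
  have cc: "?c = q * (mu * (lam * q - lam))" by (simp add: algebra_simps)
  have "oapp B ?u - scaleC (mu * q) ?u =
        scaleC q (resolvent A (lam * q) y) + scaleC ?c (resolvent A (lam * q) ?u)"
    unfolding hu hx res_add[OF linA rlq] res_scale[OF linA rlq] idA cc
    by (simp add: cv.scale_right_distrib cv.scale_left_distrib mult.commute)
  then have "resolvent B (mu * q) (scaleC q (resolvent A (lam * q) y) + scaleC ?c (resolvent A (lam * q) ?u)) = ?u"
    by (rule res_eq[OF rmq u])
  then show ?thesis by (simp add: res_lin[OF linB rmq])
qed

lemma partA_bwd:
  assumes linA: "linear_op A" and linB: "linear_op B"
    and rl: "lam \<in> resolvent_set A" and rlq: "lam * q \<in> resolvent_set A"
    and rm: "mu \<in> resolvent_set B" and rmq: "mu * q \<in> resolvent_set B"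
    and idt: "\<forall>y. resolvent A lam (resolvent B mu y) =
              scaleC q (resolvent B (mu * q) (resolvent A (lam * q) y))
              + scaleC (mu * lam * q * (q - 1))
                  (resolvent B (mu * q) (resolvent A (lam * q)
                     (resolvent A lam (resolvent B mu y))))"
    and x: "x \<in> odom B"
  shows "resolvent A lam x \<in> odom B \<and>
       scaleC q (resolvent A (lam * q) (oapp B x)) = oapp B (resolvent A lam x)"
proof -
  let ?y = "oapp B x - scaleC mu x"
  let ?u = "resolvent A lam x"
  let ?c = "mu * lam * q * (q - 1)"
  let ?w = "scaleC q (resolvent A (lam * q) ?y) + scaleC ?c (resolvent A (lam * q) ?u)"
  have sy: "resolvent B mu ?y = x" by (rule res_eq[OF rm x]) simp
  have hu: "?u = resolvent B (mu * q) ?w"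
    using idt[rule_format, of ?y] unfolding sy res_lin[OF linB rmq, symmetric] .
  have u: "?u \<in> odom B" by (subst hu) (rule res_in[OF rmq])
  have bu: "oapp B ?u = ?w + scaleC (mu * q) ?u"
    using res_right[OF rmq, of ?w] unfolding hu[symmetric] by (simp add: algebra_simps)
  have bx: "oapp B x = ?y + scaleC mu x" by simp
  have idA: "resolvent A (lam*q) x = ?u + scaleC (lam * q - lam) (resolvent A (lam*q) ?u)"
    using res_id[OF linA rl rlq, of x] by (simp add: algebra_simps)
  have cc: "?c = q * (mu * (lam * q - lam))" by (simp add: algebra_simps)
  have "scaleC q (resolvent A (lam * q) (?y + scaleC mu x)) = oapp B ?u"
    unfolding bu res_add[OF linA rlq] res_scale[OF linA rlq] idA cc
    by (simp add: cv.scale_right_distrib cv.scale_left_distrib mult.commute)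
  then show ?thesis using u by simp
qed

lemma partB_fwd:
  assumes linA: "linear_op A" and linB: "linear_op B"
    and rl: "lam \<in> resolvent_set A" and rlq: "lam * q \<in> resolvent_set A"
    and rm: "mu \<in> resolvent_set B" and rmq: "mu * q \<in> resolvent_set B"
    and inc: "\<forall>x\<in>odom A. resolvent B (mu * q) x \<in> odom A \<and>
       resolvent B mu (oapp A x) = scaleC q (oapp A (resolvent B (mu * q) x))"
  shows "resolvent A lam (resolvent B mu y) =
              scaleC q (resolvent B (mu * q) (resolvent A (lam * q) y))
              + scaleC (mu * lam * q * (q - 1))
                  (resolvent A lam (resolvent B mu
                     (resolvent B (mu * q) (resolvent A (lam * q) y))))"
proof -
  let ?x = "resolvent A (lam * q) y"
  let ?v = "resolvent B (mu * q) ?x"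
  let ?c = "mu * lam * q * (q - 1)"
  have x: "?x \<in> odom A" by (rule res_in[OF rlq])
  have hy: "y = oapp A ?x - scaleC (lam * q) ?x" using res_right[OF rlq, of y] by simp
  have v: "?v \<in> odom A" and hv: "resolvent B mu (oapp A ?x) = scaleC q (oapp A ?v)"
    using inc x by auto
  have qv: "scaleC q ?v \<in> odom A" "oapp A (scaleC q ?v) = scaleC q (oapp A ?v)"
    using lin_scale[OF linA v] by auto
  have idB: "resolvent B mu ?x = ?v - scaleC (mu * q - mu) (resolvent B mu ?v)"
    using res_id2[OF linB rm rmq, of ?x] by (simp add: algebra_simps)
  have cc: "?c = lam * q * (mu * q - mu)" by (simp add: algebra_simps)
  have key: "resolvent B mu y = (oapp A (scaleC q ?v) - scaleC lam (scaleC q ?v))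
       + scaleC ?c (resolvent B mu ?v)"
    apply (subst hy)
    unfolding res_diff[OF linB rm] res_scale[OF linB rm] hv idB qv(2) cc
    by (simp add: cv.scale_right_diff_distrib algebra_simps)
  have r: "resolvent A lam (oapp A (scaleC q ?v) - scaleC lam (scaleC q ?v)) = scaleC q ?v"
    by (rule res_eq[OF rl qv(1)]) simp
  show ?thesis
    unfolding key res_add[OF linA rl] res_scale[OF linA rl] r ..
qed

lemma partB_bwd:
  assumes linA: "linear_op A" and linB: "linear_op B" and q0: "q \<noteq> 0"
    and rl: "lam \<in> resolvent_set A" and rlq: "lam * q \<in> resolvent_set A"
    and rm: "mu \<in> resolvent_set B" and rmq: "mu * q \<in> resolvent_set B"
    and idt: "\<forall>y. resolvent A lam (resolvent B mu y) =
              scaleC q (resolvent B (mu * q) (resolvent A (lam * q) y))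
              + scaleC (mu * lam * q * (q - 1))
                  (resolvent A lam (resolvent B mu
                     (resolvent B (mu * q) (resolvent A (lam * q) y))))"
    and x: "x \<in> odom A"
  shows "resolvent B (mu * q) x \<in> odom A \<and>
       resolvent B mu (oapp A x) = scaleC q (oapp A (resolvent B (mu * q) x))"
proof -
  let ?y = "oapp A x - scaleC (lam * q) x"
  let ?v = "resolvent B (mu * q) x"
  let ?c = "mu * lam * q * (q - 1)"
  let ?z = "resolvent B mu ?y - scaleC ?c (resolvent B mu ?v)"
  have ry: "resolvent A (lam * q) ?y = x" by (rule res_eq[OF rlq x]) simp
  have "resolvent A lam (resolvent B mu ?y) = scaleC q ?v + scaleC ?c (resolvent A lam (resolvent B mu ?v))"
    using idt[rule_format, of ?y] unfolding ry .
  then have hqv: "scaleC q ?v = resolvent A lam ?z"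
    unfolding res_diff[OF linA rl] res_scale[OF linA rl] by (simp add: algebra_simps)
  have qvd: "scaleC q ?v \<in> odom A" unfolding hqv by (rule res_in[OF rl])
  have aqv: "oapp A (scaleC q ?v) = ?z + scaleC lam (scaleC q ?v)"
    using res_right[OF rl, of ?z] unfolding hqv[symmetric] by (simp add: algebra_simps)
  have ve: "?v = scaleC (1 / q) (scaleC q ?v)" using q0 by (simp add: cv.scale_scale)
  have v: "?v \<in> odom A" using lin_scale[OF linA qvd, of "1/q"] ve by simp
  have av: "oapp A (scaleC q ?v) = scaleC q (oapp A ?v)" using lin_scale[OF linA v] by simp
  have idB: "resolvent B mu x = ?v - scaleC (mu * q - mu) (resolvent B mu ?v)"
    using res_id2[OF linB rm rmq, of x] by (simp add: algebra_simps)
  have cc: "?c = lam * q * (mu * q - mu)" by (simp add: algebra_simps)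
  have ax: "oapp A x = ?y + scaleC (lam * q) x" by simp
  have "resolvent B mu (?y + scaleC (lam * q) x) = oapp A (scaleC q ?v)"
    unfolding aqv res_add[OF linB rm] res_scale[OF linB rm] idB cc
    by (simp add: cv.scale_right_diff_distrib algebra_simps)
  then show ?thesis using v av by simp
qed

theorem mainTheorem4:
  fixes q lam mu :: complex and A B :: "'a::chilbert linop"
  assumes "cmod q = 1" and "q ^ 2 \<noteq> 1"
    and "self_adjoint A" and "self_adjoint B"
    and "lam \<in> resolvent_set A" and "lam * q \<in> resolvent_set A"
    and "mu \<in> resolvent_set B" and "mu * q \<in> resolvent_set B"
  shows
    "(op_le (op_comp (op_scale q (op_total (resolvent A (lam * q)))) B)
            (op_comp B (op_total (resolvent A lam)))
      \<longleftrightarrow> (\<forall>x. resolvent A lam (resolvent B mu x) =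
              scaleC q (resolvent B (mu * q) (resolvent A (lam * q) x))
              + scaleC (mu * lam * q * (q - 1))
                  (resolvent B (mu * q) (resolvent A (lam * q)
                     (resolvent A lam (resolvent B mu x))))))
     \<and>
     (op_le (op_comp (op_total (resolvent B mu)) A)
            (op_scale q (op_comp A (op_total (resolvent B (mu * q)))))
      \<longleftrightarrow> (\<forall>x. resolvent A lam (resolvent B mu x) =
              scaleC q (resolvent B (mu * q) (resolvent A (lam * q) x))
              + scaleC (mu * lam * q * (q - 1))
                  (resolvent A lam (resolvent B mu
                     (resolvent B (mu * q) (resolvent A (lam * q) x))))))"
proof -
  have linA: "linear_op A" and linB: "linear_op B" using assms(3,4) unfolding self_adjoint_def by auto
  have q0: "q \<noteq> 0" using assms(1) by auto
  note r = assms(5-8)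
  have e1: "op_le (op_comp (op_scale q (op_total (resolvent A (lam * q)))) B)
            (op_comp B (op_total (resolvent A lam))) \<longleftrightarrow>
     (\<forall>x\<in>odom B. resolvent A lam x \<in> odom B \<and>
       scaleC q (resolvent A (lam * q) (oapp B x)) = oapp B (resolvent A lam x))"
    unfolding op_le_def op_comp_def op_scale_def op_total_def odom_def oapp_def by auto
  have e2: "op_le (op_comp (op_total (resolvent B mu)) A)
            (op_scale q (op_comp A (op_total (resolvent B (mu * q))))) \<longleftrightarrow>
     (\<forall>x\<in>odom A. resolvent B (mu * q) x \<in> odom A \<and>
       resolvent B mu (oapp A x) = scaleC q (oapp A (resolvent B (mu * q) x)))"
    unfolding op_le_def op_comp_def op_scale_def op_total_def odom_def oapp_def by auto
  show ?thesis
    unfolding e1 e2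
    using partA_fwd[OF linA linB r] partA_bwd[OF linA linB r]
      partB_fwd[OF linA linB r] partB_bwd[OF linA linB q0 r]
    by blast
qed

end
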